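(* Assume the setting described in the context. Let $P$ and $P'$ be p-matrices with $P'\subset P$, with columns $I_1,\dots,I_{p+q+2}$ and $J_1,\dots,J_{p+q+2}$ respectively, such that for every column $i$ the column $J_i$ is nested in $I_i$ in the sense described in the context, and let $K_i,L_i$ be as defined there. For $j=1,\dots,p+q+2$ form the p-matrices $(J_1,\dots,J_{j-1},K_j,I_{j+1},\dots,I_{p+q+2})$ and $(J_1,\dots,J_{j-1},L_j,I_{j+1},\dots,I_{p+q+2})$. Then these $2(p+q+2)$ p-matrices (of which the empty ones may be discarded) are pairwise disjoint, and their union is $P\setminus P'$.
   Context: $\mathbb N=\{0,1,2,\dots\}$. For $a\in\mathbb Z$, $b\in\mathbb Z\cup\{\infty\}$, $[a,b]=\{j\in\mathbb N:a\le j\le b\}$ (with $j<\infty$ if $b=\infty$). A p-matrix with data $\mathbf a\in\mathbb Z^p$, $\mathbf b\in(\mathbb Z\cup\{\infty\})^p$, $\mathbf c\in\mathbb Z^q$, $\mathbf d\in(\mathbb Z\cup\{\infty\})^q$, integer-valued functions $E,F$ on the block $[\mathbf a,\mathbf b]=\prod[a_i,b_i]$ and $G,H$ on $[\mathbf c,\mathbf d]=\prod[c_j,d_j]$, is the set $\{(\mathbf k;\boldsymbol\ell;s)\in\mathbb N^{p+q+1}:\mathbf k\in[\mathbf a,\mathbf b],\boldsymbol\ell\in[\mathbf c,\mathbf d],s\in[E(\mathbf k),F(\mathbf k)]\cap[G(\boldsymbol\ell),H(\boldsymbol\ell)]\}$. Its columns are: $I_i=[a_i,b_i]$ for $i\le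 p$ (constraint on $k_i$), $I_{p+j}=[c_j,d_j]$ for $j\le q$ (constraint on $\ell_j$), $I_{p+q+1}$ = the interval-valued function $\mathbf k\mapsto[E(\mathbf k),F(\mathbf k)]$ and $I_{p+q+2}$ = the function $\boldsymbol\ell\mapsto[G(\boldsymbol\ell),H(\boldsymbol\ell)]$ (constraints on $s$). A p-matrix is written as the tuple of its columns, and conversely any such tuple (integer intervals in the first $p+q$ positions, interval-valued functions of $\mathbf k$ resp. $\boldsymbol\ell$ in the last two, each defined on the block given by the corresponding first columns) defines a p-matrix. Nesting: for an integer-interval column $I_i=[u,v]$, $J_i=[u',v']$, nesting means $u\le u'\le v'+1\le v+1$ (with $\infty+1=\infty$); then $K_i=[u,u'-1]$ and $L_i=[v'+1,v]$ (empty if $v'=v=\infty$). For the $s$-columns nesting means this pointwise: $E(\mathbf k)\le E'(\mathbf k)\le F'(\mathbf k)+1\le F(\mathbf k)+1$ for every $\mathbf k$ in the $\mathbf k$-block of $P'$ (and likewise for $G,H$ versus $G',H'$ on the $\boldsymbol\ell$-block of $P'$), and $K_{p+q+1}$ is $\mathbf k\mapsto[E(\mathbf k),E'(\mathbf k)-1]$, $L_{p+q+1}$ is $\mathbf k\mapsto[F'(\mathbf k)+1,F(\mathbf k)]$, similarly for column $p+q+2$. Under nesting, $I_i\setminus J_i=K_i\sqcup L_i$. *)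

theory Defs
  imports Main
begin

datatype ubound = Fin int | Infty

fun ub_suc :: "ubound \<Rightarrow> ubound" where
  "ub_suc (Fin v) = Fin (v + 1)"
| "ub_suc Infty = Infty"

fun ub_le :: "ubound \<Rightarrow> ubound \<Rightarrow> bool" where
  "ub_le _ Infty = True"
| "ub_le Infty (Fin _) = False"
| "ub_le (Fin x) (Fin y) = (x \<le> y)"

text \<open>An interval column [u,v] with u integer, v integer or infinity.\<close>
type_synonym intv = "int \<times> ubound"

definition intv_set :: "intv \<Rightarrow> nat set" where
  "intv_set I = {j::nat. fst I \<le> int j \<and> ub_le (Fin (int j)) (snd I)}"

definition nested :: "intv \<Rightarrow> intv \<Rightarrow> bool" where
  "nested J I \<longleftrightarrow> fst I \<le> fst J \<and> ub_le (Fin (fst J)) (ub_suc (snd J))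
                    \<and> ub_le (ub_suc (snd J)) (ub_suc (snd I))"

text \<open>K = [u, u'-1] and L = [v'+1, v] (empty if v' = v = infinity).\<close>
definition Kint :: "intv \<Rightarrow> intv \<Rightarrow> intv" where
  "Kint I J = (fst I, Fin (fst J - 1))"

definition Lint :: "intv \<Rightarrow> intv \<Rightarrow> intv" where
  "Lint I J = (case snd J of Fin w \<Rightarrow> (w + 1, snd I) | Infty \<Rightarrow> (0, Fin (-1)))"

text \<open>A p-matrix: interval columns for k (length p), for l (length q),
  and the interval-valued functions k \<mapsto> [E k, F k], l \<mapsto> [G l, H l].
  Points (k; l; s) of N^(p+q+1) are represented as (k, l, s) with k, l lists.\<close>
datatype pmat = PM "intv list" "intv list" "nat list \<Rightarrow> intv" "nat list \<Rightarrow> intv"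

fun kcols :: "pmat \<Rightarrow> intv list" where "kcols (PM A C EF GH) = A"
fun lcols :: "pmat \<Rightarrow> intv list" where "lcols (PM A C EF GH) = C"
fun scolk :: "pmat \<Rightarrow> nat list \<Rightarrow> intv" where "scolk (PM A C EF GH) = EF"
fun scoll :: "pmat \<Rightarrow> nat list \<Rightarrow> intv" where "scoll (PM A C EF GH) = GH"

definition block :: "intv list \<Rightarrow> nat list set" where
  "block A = {k. length k = length A \<and> (\<forall>i<length A. k ! i \<in> intv_set (A ! i))}"

definition pset :: "pmat \<Rightarrow> (nat list \<times> nat list \<times> nat) set" where
  "pset P = {(k, l, s). k \<in> block (kcols P) \<and> l \<in> block (lcols P)
              \<and> s \<in> intv_set (scolk P k) \<and> s \<in> intv_set (scoll P l)}"

text \<open>Columnwise nesting of P' in P (the s-columns pointwise on the blocks of P').\<close>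
definition pm_nested :: "pmat \<Rightarrow> pmat \<Rightarrow> bool" where
  "pm_nested P' P \<longleftrightarrow>
     length (kcols P') = length (kcols P) \<and> length (lcols P') = length (lcols P)
   \<and> (\<forall>i<length (kcols P). nested (kcols P' ! i) (kcols P ! i))
   \<and> (\<forall>i<length (lcols P). nested (lcols P' ! i) (lcols P ! i))
   \<and> (\<forall>k\<in>block (kcols P'). nested (scolk P' k) (scolk P k))
   \<and> (\<forall>l\<in>block (lcols P'). nested (scoll P' l) (scoll P l))"

text \<open>The p-matrix (J_1,...,J_{j-1}, X_j, I_{j+1},...,I_{p+q+2}) where X = K (side True)
  or X = L (side False); here j is 0-indexed, j < p+q+2.\<close>
definition piece :: "pmat \<Rightarrow> pmat \<Rightarrow> nat \<Rightarrow> bool \<Rightarrow> pmat" where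
  "piece P P' j side =
    (let X = (if side then Kint else Lint);
         p = length (kcols P); q = length (lcols P);
         A = kcols P; A' = kcols P'; C = lcols P; C' = lcols P';
         EF = scolk P; EF' = scolk P'; GH = scoll P; GH' = scoll P' in
     if j < p then PM (take j A' @ [X (A ! j) (A' ! j)] @ drop (Suc j) A) C EF GH
     else if j < p + q then
       PM A' (take (j - p) C' @ [X (C ! (j - p)) (C' ! (j - p))] @ drop (Suc (j - p)) C) EF GH
     else if j = p + q then PM A' C' (\<lambda>k. X (EF k) (EF' k)) GH
     else PM A' C' EF' (\<lambda>l. X (GH l) (GH' l)))"

end

theory Submission
  imports Defs
begin
lemma nested_sub:
  assumes "nested J I" shows "intv_set J \<subseteq> intv_set I"
  using assms
  apply (cases I; cases J)
  apply (rename_tac u v u' v')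
  apply (case_tac v; case_tac v'; simp add: nested_def intv_set_def subset_iff)
  done
lemma nested_K:
  assumes "nested J I" shows "intv_set (Kint I J) \<subseteq> intv_set I - intv_set J"
  using assms
  apply (cases I; cases J)
  apply (rename_tac u v u' v')
  apply (case_tac v; case_tac v'; simp add: nested_def intv_set_def subset_iff Kint_def)
  done
lemma nested_L:
  assumes "nested J I" shows "intv_set (Lint I J) \<subseteq> intv_set I - intv_set J"
  using assms
  apply (cases I; cases J)
  apply (rename_tac u v u' v')
  apply (case_tac v; case_tac v'; simp add: nested_def intv_set_def subset_iff Lint_def)
  done
lemma nested_KL:
  assumes "nested J I" shows "intv_set I - intv_set J \<subseteq> intv_set (Kint I J) \<union> intv_set (Lint I J)"
  using assms
  apply (cases I; cases J)
  apply (rename_tac u v u' v')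
  apply (case_tac v; case_tac v'; simp add: nested_def intv_set_def subset_iff Lint_def Kint_def; auto)
  done
lemma nested_disj:
  assumes "nested J I" shows "intv_set (Kint I J) \<inter> intv_set (Lint I J) = {}"
  using assms
  apply (cases I; cases J)
  apply (rename_tac u v u' v')
  apply (case_tac v; case_tac v'; simp add: nested_def intv_set_def Lint_def Kint_def; auto)
  done
lemma abstract:
  fixes inI inJ :: "nat \<Rightarrow> bool" and inX :: "bool \<Rightarrow> nat \<Rightarrow> bool"
  assumes h: "\<And>i. i<N \<Longrightarrow> \<forall>i'<i. inJ i' \<Longrightarrow>
     (\<forall>b. inX b i \<longrightarrow> inI i \<and> \<not> inJ i) \<and> (inJ i \<longrightarrow> inI i)
     \<and> (inI i \<and> \<not> inJ i \<longrightarrow> (\<exists>b. inX b i)) \<and> \<not>(inX True i \<and> inX False i)"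
  defines "mem \<equiv> \<lambda>j b. \<forall>i<N. if i<j then inJ i else if i = j then inX b i else inI i"
  shows "j<N \<Longrightarrow> j'<N \<Longrightarrow> (j,b) \<noteq> (j',b') \<Longrightarrow> \<not>(mem j b \<and> mem j' b')"
    and "(\<exists>j<N. \<exists>b. mem j b) \<longleftrightarrow> (\<forall>i<N. inI i) \<and> \<not>(\<forall>i<N. inJ i)"
proof -
  have memE: "\<And>i. mem j b \<Longrightarrow> i<N \<Longrightarrow> (if i<j then inJ i else if i = j then inX b i else inI i)"
    for j b unfolding mem_def by blast
  have pre: "\<And>i. mem j b \<Longrightarrow> i<j \<Longrightarrow> j<N \<Longrightarrow> inJ i" for j b
    using memE by (metis less_trans)
  have atj: "mem j b \<Longrightarrow> j<N \<Longrightarrow> inX b j" for j b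
    using memE[of j b j] by simp
  have post: "\<And>i. mem j b \<Longrightarrow> j<i \<Longrightarrow> i<N \<Longrightarrow> inI i" for j b
    using memE by (metis less_not_sym less_irrefl)
  show "j<N \<Longrightarrow> j'<N \<Longrightarrow> (j,b) \<noteq> (j',b') \<Longrightarrow> \<not>(mem j b \<and> mem j' b')"
  proof
    assume a: "j<N" "j'<N" "(j,b) \<noteq> (j',b')" and m: "mem j b \<and> mem j' b'"
    have c: "j < j' \<or> j' < j \<or> (j = j' \<and> b \<noteq> b')" using a by auto
    have pj: "\<forall>i'<j. inJ i'" using pre m a by blast
    have pj': "\<forall>i'<j'. inJ i'" using pre m a by blast
    have x1: "inX b j" using atj m a by blast
    have x2: "inX b' j'" using atj m a by blast
    show False
    proof -
      { assume "j < j'" then have "inJ j" using pj' by blast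
        then have False using h[OF a(1) pj] x1 by blast }
      moreover
      { assume "j' < j" then have "inJ j'" using pj by blast
        then have False using h[OF a(2) pj'] x2 by blast }
      moreover
      { assume e: "j = j'" "b \<noteq> b'"
        then have "inX True j \<and> inX False j" using x1 x2 by (cases b) auto
        then have False using h[OF a(1) pj] by blast }
      ultimately show False using c by blast
    qed
  qed
  show "(\<exists>j<N. \<exists>b. mem j b) \<longleftrightarrow> (\<forall>i<N. inI i) \<and> \<not>(\<forall>i<N. inJ i)"
  proof
    assume "\<exists>j<N. \<exists>b. mem j b"
    then obtain j b where j: "j<N" "mem j b" by blast
    have p: "\<forall>i'<j. inJ i'" using pre j by blast
    have xj: "inX b j" using atj j by blast
    have hj: "inI j \<and> \<not> inJ j" using h[OF j(1) p] xj by blast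
    have "inI i" if "i<N" for i
    proof -
      have "i < j \<or> i = j \<or> j < i" by auto
      moreover
      { assume "i < j"
        then have "\<forall>i'<i. inJ i'" "inJ i" using p by auto
        then have "inI i" using h[OF that] by blast }
      ultimately show ?thesis using hj post[OF j(2) _ that] by blast
    qed
    then show "(\<forall>i<N. inI i) \<and> \<not>(\<forall>i<N. inJ i)" using j hj by blast
  next
    assume a: "(\<forall>i<N. inI i) \<and> \<not>(\<forall>i<N. inJ i)"
    define j where "j = (LEAST i. i < N \<and> \<not> inJ i)"
    have ex: "\<exists>i. i < N \<and> \<not> inJ i" using a by blast
    have j1: "j < N \<and> \<not> inJ j" unfolding j_def using LeastI_ex[OF ex] .
    have p: "\<forall>i'<j. inJ i'"
    proof (intro allI impI)
      fix i' assume "i' < j"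
      then have "\<not> (i' < N \<and> \<not> inJ i')" unfolding j_def by (rule not_less_Least)
      then show "inJ i'" using \<open>i'<j\<close> j1 by auto
    qed
    obtain b where b: "inX b j" using h[OF conjunct1[OF j1] p] a j1 by blast
    have "mem j b" unfolding mem_def using p a b by auto
    then show "\<exists>j<N. \<exists>b. mem j b" using j1 by blast
  qed
qed

lemma nth_mix:
  assumes "j < length A" "length A' = length A" "i < length A"
  shows "(take j A' @ [Y] @ drop (Suc j) A) ! i = (if i<j then A'!i else if i=j then Y else A!i)"
  using assms by (auto simp: nth_append min_def)

lemma block_mix:
  assumes "j < length A" "length A' = length A"
  shows "k \<in> block (take j A' @ [Y] @ drop (Suc j) A) \<longleftrightarrow>
    length k = length A \<and> (\<forall>i<length A. k!i \<in> intv_set (if i<j then A'!i else if i=j then Y else A!i))"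
proof -
  have l: "length (take j A' @ [Y] @ drop (Suc j) A) = length A" using assms by simp
  show ?thesis unfolding block_def l using nth_mix[OF assms] by simp
qed

lemma split_all:
  "(\<forall>i<p+q+2. R (i::nat)) \<longleftrightarrow> (\<forall>i<p. R i) \<and> (\<forall>i<q. R (p+i)) \<and> R (p+q) \<and> R (p+q+1)"
proof
  assume "\<forall>i<p+q+2. R i" then show "(\<forall>i<p. R i) \<and> (\<forall>i<q. R (p+i)) \<and> R (p+q) \<and> R (p+q+1)" by simp
next
  assume a: "(\<forall>i<p. R i) \<and> (\<forall>i<q. R (p+i)) \<and> R (p+q) \<and> R (p+q+1)"
  show "\<forall>i<p+q+2. R i"
  proof (intro allI impI)
    fix i assume i: "i < p+q+2"
    consider "i < p" | "p \<le> i" "i < p+q" | "i = p+q" | "i = p+q+1" using i by linarith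
    then show "R i"
    proof cases
      case 2 then have "i - p < q" by simp
      then have "R (p + (i-p))" using a by blast
      then show ?thesis using 2 by simp
    qed (use a in auto)
  qed
qed


abbreviation XX :: "bool \<Rightarrow> intv \<Rightarrow> intv \<Rightarrow> intv" where
  "XX b \<equiv> (if b then Kint else Lint)"

lemma nested_h1:
  assumes "nested J I" "x \<in> intv_set (XX b I J)"
  shows "x \<in> intv_set I \<and> x \<notin> intv_set J"
proof (cases b)
  case True then show ?thesis using assms(2) nested_K[OF assms(1)] by auto
next
  case False then show ?thesis using assms(2) nested_L[OF assms(1)] by auto
qed

lemma nested_h3:
  assumes "nested J I" "x \<in> intv_set I" "x \<notin> intv_set J"
  shows "\<exists>b. x \<in> intv_set (XX b I J)"
proof -
  have "x \<in> intv_set (Kint I J) \<or> x \<in> intv_set (Lint I J)" using nested_KL[OF assms(1)] assms(2,3) by blast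
  then show ?thesis
  proof
    assume "x \<in> intv_set (Kint I J)" then show ?thesis by (intro exI[of _ True]) simp
  next
    assume "x \<in> intv_set (Lint I J)" then show ?thesis by (intro exI[of _ False]) simp
  qed
qed

lemma nested_h4:
  assumes "nested J I"
  shows "\<not>(x \<in> intv_set (XX True I J) \<and> x \<in> intv_set (XX False I J))"
  using nested_disj[OF assms] by auto

lemma nested_h:
  assumes "nested J I"
  shows "(\<forall>b. x \<in> intv_set (XX b I J) \<longrightarrow> x \<in> intv_set I \<and> x \<notin> intv_set J)
     \<and> (x \<in> intv_set J \<longrightarrow> x \<in> intv_set I)
     \<and> (x \<in> intv_set I \<and> x \<notin> intv_set J \<longrightarrow> (\<exists>b. x \<in> intv_set (XX b I J)))
     \<and> \<not>(x \<in> intv_set (XX True I J) \<and> x \<in> intv_set (XX False I J))"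
  apply (intro conjI allI impI)
  using nested_h1[OF assms] nested_h3[OF assms] nested_h4[OF assms] nested_sub[OF assms]
  by blast+

definition crd :: "nat \<Rightarrow> nat \<Rightarrow> nat \<Rightarrow> nat list \<times> nat list \<times> nat \<Rightarrow> nat" where
  "crd p q i pt = (case pt of (k,l,x) \<Rightarrow> if i<p then k!i else if i<p+q then l!(i-p) else x)"

definition colf :: "nat \<Rightarrow> nat \<Rightarrow> intv list \<Rightarrow> intv list \<Rightarrow> (nat list \<Rightarrow> intv) \<Rightarrow> (nat list \<Rightarrow> intv)
   \<Rightarrow> nat \<Rightarrow> nat list \<times> nat list \<times> nat \<Rightarrow> intv" where
  "colf p q A C EF GH i pt = (case pt of (k,l,x) \<Rightarrow>
     if i<p then A!i else if i<p+q then C!(i-p) else if i = p+q then EF k else GH l)"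

lemma pset_piece:
  assumes "length A' = length A" "length C' = length C" "j < length A + length C + 2"
  shows "(k,l,x) \<in> pset (piece (PM A C EF GH) (PM A' C' EF' GH') j b) \<longleftrightarrow>
    length k = length A \<and> length l = length C \<and>
    (\<forall>i<length A + length C + 2.
       crd (length A) (length C) i (k,l,x) \<in> intv_set
         (if i<j then colf (length A) (length C) A' C' EF' GH' i (k,l,x)
          else if i = j then (if b then Kint else Lint) (colf (length A) (length C) A C EF GH i (k,l,x))
                                   (colf (length A) (length C) A' C' EF' GH' i (k,l,x))
          else colf (length A) (length C) A C EF GH i (k,l,x)))"
  (is "?L \<longleftrightarrow> ?R")
proof -
  consider "j < length A" | "length A \<le> j" "j < length A + length C"
    | "j = length A + length C" | "j = length A + length C + 1" using assms(3) by linarith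
  then show ?thesis
  proof cases
    case 1
    have e: "piece (PM A C EF GH) (PM A' C' EF' GH') j b =
       PM (take j A' @ [(if b then Kint else Lint) (A ! j) (A' ! j)] @ drop (Suc j) A) C EF GH"
      using 1 by (simp add: piece_def Let_def)
    have "?L \<longleftrightarrow> (k \<in> block (take j A' @ [(if b then Kint else Lint) (A ! j) (A' ! j)] @ drop (Suc j) A))
       \<and> l \<in> block C \<and> x \<in> intv_set (EF k) \<and> x \<in> intv_set (GH l)"
      by (simp only: e pset_def mem_Collect_eq case_prod_conv kcols.simps lcols.simps scolk.simps scoll.simps)
    also have "\<dots> \<longleftrightarrow> ?R"
      unfolding block_mix[OF 1 assms(1)] split_all
      using 1 by (auto simp: block_def crd_def colf_def)
    finally show ?thesis .
  next
    case 2
    have jj: "j - length A < length C" using 2 by simp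
    have e: "piece (PM A C EF GH) (PM A' C' EF' GH') j b =
       PM A' (take (j - length A) C' @ [(if b then Kint else Lint) (C ! (j - length A)) (C' ! (j - length A))]
          @ drop (Suc (j - length A)) C) EF GH"
      using 2 by (simp add: piece_def Let_def)
    have "?L \<longleftrightarrow> k \<in> block A' \<and> (l \<in> block (take (j - length A) C' @ [(if b then Kint else Lint) (C ! (j - length A)) (C' ! (j - length A))]
          @ drop (Suc (j - length A)) C))
       \<and> x \<in> intv_set (EF k) \<and> x \<in> intv_set (GH l)"
      by (simp only: e pset_def mem_Collect_eq case_prod_conv kcols.simps lcols.simps scolk.simps scoll.simps)
    also have "\<dots> \<longleftrightarrow> ?R"
      unfolding block_mix[OF jj assms(2)] split_all
      using 2 assms(1) by (auto simp: block_def crd_def colf_def less_diff_conv2 le_diff_conv2)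
    finally show ?thesis .
  next
    case 3
    have e: "piece (PM A C EF GH) (PM A' C' EF' GH') j b =
       PM A' C' (\<lambda>k. (if b then Kint else Lint) (EF k) (EF' k)) GH"
      using 3 by (simp add: piece_def Let_def)
    have "?L \<longleftrightarrow> k \<in> block A' \<and> l \<in> block C'
       \<and> x \<in> intv_set ((if b then Kint else Lint) (EF k) (EF' k)) \<and> x \<in> intv_set (GH l)"
      by (simp only: e pset_def mem_Collect_eq case_prod_conv kcols.simps lcols.simps scolk.simps scoll.simps)
    also have "\<dots> \<longleftrightarrow> ?R"
      unfolding split_all
      using 3 assms(1,2) by (auto simp: block_def crd_def colf_def)
    finally show ?thesis .
  next
    case 4
    have e: "piece (PM A C EF GH) (PM A' C' EF' GH') j b =
       PM A' C' EF' (\<lambda>l. (if b then Kint else Lint) (GH l) (GH' l))"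
      using 4 by (simp add: piece_def Let_def)
    have "?L \<longleftrightarrow> k \<in> block A' \<and> l \<in> block C'
       \<and> x \<in> intv_set (EF' k) \<and> x \<in> intv_set ((if b then Kint else Lint) (GH l) (GH' l))"
      by (simp only: e pset_def mem_Collect_eq case_prod_conv kcols.simps lcols.simps scolk.simps scoll.simps)
    also have "\<dots> \<longleftrightarrow> ?R"
      unfolding split_all
      using 4 assms(1,2) by (auto simp: block_def crd_def colf_def)
    finally show ?thesis .
  qed
qed

lemma pset_full:
  "(k,l,x) \<in> pset (PM A C EF GH) \<longleftrightarrow> length k = length A \<and> length l = length C \<and>
    (\<forall>i<length A + length C + 2.
       crd (length A) (length C) i (k,l,x) \<in> intv_set (colf (length A) (length C) A C EF GH i (k,l,x)))"
  unfolding split_all pset_def by (auto simp: block_def crd_def colf_def)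

theorem theorem14p2:
  fixes P P' :: pmat
  assumes "pset P' \<subseteq> pset P"
    and "pm_nested P' P"
  defines "N \<equiv> length (kcols P) + length (lcols P) + 2"
  shows "(\<forall>j\<in>{..<N}. \<forall>j'\<in>{..<N}. \<forall>s s'. (j, s) \<noteq> (j', s') \<longrightarrow>
            pset (piece P P' j s) \<inter> pset (piece P P' j' s') = {})
         \<and> (\<Union>j\<in>{..<N}. \<Union>s\<in>UNIV. pset (piece P P' j s)) = pset P - pset P'"
proof -
  obtain A C EF GH where P: "P = PM A C EF GH" by (cases P)
  obtain A' C' EF' GH' where P': "P' = PM A' C' EF' GH'" by (cases P')
  define p where "p = length A"
  define q where "q = length C"
  have Npq: "N = p + q + 2" unfolding N_def P p_def q_def by simp
  have lA: "length A' = p" and lC: "length C' = q"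
    using assms(2) unfolding pm_nested_def P P' p_def q_def by auto
  have nA: "\<And>i. i<p \<Longrightarrow> nested (A'!i) (A!i)"
    using assms(2) unfolding pm_nested_def P P' p_def by auto
  have nC: "\<And>i. i<q \<Longrightarrow> nested (C'!i) (C!i)"
    using assms(2) unfolding pm_nested_def P P' q_def by auto
  have nE: "\<And>k. k \<in> block A' \<Longrightarrow> nested (EF' k) (EF k)"
    using assms(2) unfolding pm_nested_def P P' by auto
  have nG: "\<And>l. l \<in> block C' \<Longrightarrow> nested (GH' l) (GH l)"
    using assms(2) unfolding pm_nested_def P P' by auto
  define inI where "inI pt i = (crd p q i pt \<in> intv_set (colf p q A C EF GH i pt))" for pt i
  define inJ where "inJ pt i = (crd p q i pt \<in> intv_set (colf p q A' C' EF' GH' i pt))" for pt i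
  define inX where "inX pt b i = (crd p q i pt \<in> intv_set (XX b (colf p q A C EF GH i pt) (colf p q A' C' EF' GH' i pt)))" for pt b i
  define mem where "mem pt j b = (\<forall>i<N. if i<j then inJ pt i else if i = j then inX pt b i else inI pt i)" for pt j b
  have H: "(\<forall>b. inX (k,l,x) b i \<longrightarrow> inI (k,l,x) i \<and> \<not> inJ (k,l,x) i) \<and> (inJ (k,l,x) i \<longrightarrow> inI (k,l,x) i)
     \<and> (inI (k,l,x) i \<and> \<not> inJ (k,l,x) i \<longrightarrow> (\<exists>b. inX (k,l,x) b i)) \<and> \<not>(inX (k,l,x) True i \<and> inX (k,l,x) False i)"
    if lk: "length k = p" and ll: "length l = q" and i: "i < N" and pre: "\<forall>i'<i. inJ (k,l,x) i'" for k l x i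
  proof -
    have "nested (colf p q A' C' EF' GH' i (k,l,x)) (colf p q A C EF GH i (k,l,x))"
    proof -
      consider "i < p" | "p \<le> i" "i < p+q" | "i = p+q" | "i = p+q+1" using i Npq by linarith
      then show ?thesis
      proof cases
        case 1 then show ?thesis using nA by (simp add: colf_def)
      next
        case 2 then show ?thesis using nC[of "i-p"] by (simp add: colf_def)
      next
        case 3
        have "k \<in> block A'"
          unfolding block_def
        proof (intro CollectI conjI allI impI)
          show "length k = length A'" using lk lA by simp
          fix i' assume "i' < length A'"
          then have "inJ (k,l,x) i'" using pre 3 lA by auto
          then show "k ! i' \<in> intv_set (A' ! i')" using \<open>i' < length A'\<close> lA
            unfolding inJ_def by (simp add: crd_def colf_def)
        qed
        then show ?thesis using nE 3 by (simp add: colf_def)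
      next
        case 4
        have "l \<in> block C'"
          unfolding block_def
        proof (intro CollectI conjI allI impI)
          show "length l = length C'" using ll lC by simp
          fix i' assume "i' < length C'"
          then have "inJ (k,l,x) (p+i')" using pre 4 lC by auto
          then show "l ! i' \<in> intv_set (C' ! i')" using \<open>i' < length C'\<close> lC
            unfolding inJ_def by (simp add: crd_def colf_def)
        qed
        then show ?thesis using nG 4 by (simp add: colf_def)
      qed
    qed
    from nested_h[OF this, of "crd p q i (k,l,x)"]
    show ?thesis unfolding inI_def inJ_def inX_def by blast
  qed
  have D: "\<not>(mem (k,l,x) j b \<and> mem (k,l,x) j' b')"
    if "length k = p" "length l = q" "j<N" "j'<N" "(j,b) \<noteq> (j',b')" for k l x j b j' b'
    unfolding mem_def
    by (rule abstract(1)[where N=N and inI="inI (k,l,x)" and inJ="inJ (k,l,x)" and inX="inX (k,l,x)", OF H[OF that(1,2)] that(3-5)])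
  have U: "(\<exists>j<N. \<exists>b. mem (k,l,x) j b) \<longleftrightarrow> (\<forall>i<N. inI (k,l,x) i) \<and> \<not>(\<forall>i<N. inJ (k,l,x) i)"
    if "length k = p" "length l = q" for k l x
    unfolding mem_def
    by (rule abstract(2)[where N=N and inI="inI (k,l,x)" and inJ="inJ (k,l,x)" and inX="inX (k,l,x)", OF H[OF that(1,2)]])
  have PC: "(k,l,x) \<in> pset (piece P P' j b) \<longleftrightarrow> length k = p \<and> length l = q \<and> mem (k,l,x) j b"
    if "j < N" for k l x j b
  proof -
    have "j < length A + length C + 2" using that Npq p_def q_def by simp
    note e = pset_piece[OF lA[unfolded p_def] lC[unfolded q_def] this, of k l x EF GH EF' GH' b]
    have c: "(c \<in> intv_set (if P1 then X1 else if P2 then X2 else X3)) =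
       (if P1 then c \<in> intv_set X1 else if P2 then c \<in> intv_set X2 else c \<in> intv_set X3)" for c P1 P2 X1 X2 X3
      by simp
    show ?thesis unfolding P P' mem_def inI_def inJ_def inX_def Npq p_def q_def
      using e[unfolded c] .
  qed
  have PP: "(k,l,x) \<in> pset P \<longleftrightarrow> length k = p \<and> length l = q \<and> (\<forall>i<N. inI (k,l,x) i)" for k l x
    unfolding P inI_def Npq p_def q_def by (rule pset_full)
  have PP': "(k,l,x) \<in> pset P' \<longleftrightarrow> length k = p \<and> length l = q \<and> (\<forall>i<N. inJ (k,l,x) i)" for k l x
    using pset_full[of k l x A' C' EF' GH'] unfolding lA lC P' inJ_def Npq .
  have part1: "\<forall>j\<in>{..<N}. \<forall>j'\<in>{..<N}. \<forall>s s'. (j, s) \<noteq> (j', s') \<longrightarrow>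
            pset (piece P P' j s) \<inter> pset (piece P P' j' s') = {}"
  proof (intro ballI allI impI)
    fix j j' and s s' :: bool assume j: "j \<in> {..<N}" "j' \<in> {..<N}" "(j, s) \<noteq> (j', s')"
    show "pset (piece P P' j s) \<inter> pset (piece P P' j' s') = {}"
    proof (rule equals0I)
      fix pt assume "pt \<in> pset (piece P P' j s) \<inter> pset (piece P P' j' s')"
      then obtain k l x where pt: "pt = (k,l,x)" "(k,l,x) \<in> pset (piece P P' j s)" "(k,l,x) \<in> pset (piece P P' j' s')"
        by (cases pt) auto
      have jN: "j < N" "j' < N" using j by auto
      have a1: "length k = p \<and> length l = q \<and> mem (k,l,x) j s"
        using PC[where j=j and k=k and l=l and x=x and b=s, OF jN(1)] pt(2) by simp
      have a2: "mem (k,l,x) j' s'"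
        using PC[where j=j' and k=k and l=l and x=x and b=s', OF jN(2)] pt(3) by simp
      show False using D[where k=k and l=l and x=x and j=j and j'=j' and b=s and b'=s'] a1 a2 jN j(3) by simp
    qed
  qed
  have part2: "(\<Union>j\<in>{..<N}. \<Union>s\<in>UNIV. pset (piece P P' j s)) = pset P - pset P'"
  proof (rule set_eqI)
    fix pt :: "nat list \<times> nat list \<times> nat"
    obtain k l x where pt: "pt = (k,l,x)" by (cases pt)
    show "pt \<in> (\<Union>j\<in>{..<N}. \<Union>s\<in>UNIV. pset (piece P P' j s)) \<longleftrightarrow> pt \<in> pset P - pset P'"
    proof (cases "length k = p \<and> length l = q")
      case True
      have L: "pt \<in> (\<Union>j\<in>{..<N}. \<Union>s\<in>UNIV. pset (piece P P' j s)) \<longleftrightarrow> (\<exists>j<N. \<exists>b. mem (k,l,x) j b)"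
        unfolding pt using PC True by auto
      have R: "pt \<in> pset P - pset P' \<longleftrightarrow> (\<forall>i<N. inI (k,l,x) i) \<and> \<not>(\<forall>i<N. inJ (k,l,x) i)"
        unfolding pt using PP PP' True by simp
      show ?thesis unfolding L R using U True by simp
    next
      case False
      have L: "pt \<notin> (\<Union>j\<in>{..<N}. \<Union>s\<in>UNIV. pset (piece P P' j s))"
        unfolding pt using PC False by auto
      have R: "pt \<notin> pset P" unfolding pt using PP False by auto
      show ?thesis using L R by simp
    qed
  qed
  show ?thesis using part1 part2 by blast
qed
end
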